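(* Let $\rho_1,\dots,\rho_M>0$ and $\zeta_1,\dots,\zeta_M\in\mathbb C$ be such that the closed disks $\overline{B_{\rho_k}(\zeta_k)}$ are pairwise disjoint, and let $\mathcal D=\mathbb C\setminus\bigcup_k\overline{B_{\rho_k}(\zeta_k)}$. Let $f$ be an injective conformal map on $\overline{\mathcal D}$ (holomorphic, $C^1$ up to the boundary, $\partial_\zeta f\neq0$) with $f(\zeta)=\zeta+O(1/\zeta)$ as $\zeta\to\infty$, and $w$ a (possibly multivalued) holomorphic function on $\mathcal D$ with $\partial_\zeta w$ single-valued, continuous up to $\partial\mathcal D$, and $\partial_\zeta w=O(1/\zeta)$ as $\zeta\to\infty$. Let $c\in\mathbb R$ and $U=\partial_\zeta w/\partial_\zeta f-c$ (translating case, $\Omega=0$), and suppose that the kinematic and Bernoulli conditions hold on each $\partial B_{\rho_k}(\zeta_k)$, i.e. this is a translating hollow vortex configuration. Then $|c|\le M\sup_{\partial\mathcal D}|U|$; in particular $|c|\le M\,N_{\mathrm{vel}}$ where $N_{\mathrm{vel}}=\sup_{\partial\mathcal D}(|U|+1/|U|)$.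
   Context: Kinematic condition: $\operatorname{Re}((\zeta-\zeta_k)\partial_\zeta f\,U)=0$ on $\partial B_{\rho_k}(\zeta_k)$; Bernoulli condition: $|U|$ is constant on each $\partial B_{\rho_k}(\zeta_k)$. ($\overline U$ is the relative velocity in the frame translating with speed $c$.) *)

theory Defs
  imports "HOL-Complex_Analysis.Complex_Analysis" "HOL-Library.Landau_Symbols"
begin

definition hv_domain :: "nat \<Rightarrow> (nat \<Rightarrow> complex) \<Rightarrow> (nat \<Rightarrow> real) \<Rightarrow> complex set" where
  "hv_domain M zc r = - (\<Union>k<M. cball (zc k) (r k))"

text \<open>Relative velocity (conjugate) U = dw/f' - c, where W is the single-valued
  derivative of the (possibly multivalued) complex potential w and f' is the derivative of f.\<close>
definition hv_U :: "(complex \<Rightarrow> complex) \<Rightarrow> (complex \<Rightarrow> complex) \<Rightarrow> real \<Rightarrow> complex \<Rightarrow> complex" where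
  "hv_U W f' c z = W z / f' z - complex_of_real c"

end

theory Submission
  imports Defs
begin

theorem proposition7p7:
  fixes M :: nat and zc :: "nat \<Rightarrow> complex" and r :: "nat \<Rightarrow> real"
    and f f' W :: "complex \<Rightarrow> complex" and c :: real
  assumes M_pos: "M \<ge> 1"
    and r_pos: "\<forall>k<M. r k > 0"
    and disjoint: "\<forall>j<M. \<forall>k<M. j \<noteq> k \<longrightarrow> cball (zc j) (r j) \<inter> cball (zc k) (r k) = {}"
    and f_deriv: "\<forall>z\<in>closure (hv_domain M zc r).
                    (f has_field_derivative f' z) (at z within closure (hv_domain M zc r))"
    and f'_cont: "continuous_on (closure (hv_domain M zc r)) f'"
    and f'_nz: "\<forall>z\<in>closure (hv_domain M zc r). f' z \<noteq> 0"
    and f_inj: "inj_on f (closure (hv_domain M zc r))"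
    and f_infty: "(\<lambda>z. f z - z) \<in> O[at_infinity](\<lambda>z. 1 / z)"
    and W_holo: "W holomorphic_on hv_domain M zc r"
    and W_cont: "continuous_on (closure (hv_domain M zc r)) W"
    and W_infty: "W \<in> O[at_infinity](\<lambda>z. 1 / z)"
    and kinematic: "\<forall>k<M. \<forall>z\<in>sphere (zc k) (r k).
                      Re ((z - zc k) * f' z * hv_U W f' c z) = 0"
    and bernoulli: "\<forall>k<M. \<exists>B. \<forall>z\<in>sphere (zc k) (r k). norm (hv_U W f' c z) = B"
  shows "\<bar>c\<bar> \<le> real M * (SUP z\<in>frontier (hv_domain M zc r). norm (hv_U W f' c z))
       \<and> \<bar>c\<bar> \<le> real M * (SUP z\<in>frontier (hv_domain M zc r).
                              norm (hv_U W f' c z) + 1 / norm (hv_U W f' c z))"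
proof -
  define D where "D = hv_domain M zc r"
  define U where "U = hv_U W f' c"
  define S where "S = (SUP z\<in>frontier D. norm (U z))"
  have closedC: "closed (\<Union>k<M. cball (zc k) (r k))" by (intro closed_UN) auto
  have openD: "open D" unfolding D_def hv_domain_def by (rule open_Compl[OF closedC])
  have bC: "bounded (\<Union>k<M. cball (zc k) (r k))" by (intro bounded_UN) auto
  then obtain b where bpos: "b > 0" and bb: "\<And>x. x \<in> (\<Union>k<M. cball (zc k) (r k)) \<Longrightarrow> norm x \<le> b"
    unfolding bounded_pos by blast
  define R0 where "R0 = b + 1"
  have R0D: "z \<in> D" if "norm z \<ge> R0" for z
    using bb[of z] that unfolding D_def hv_domain_def R0_def by fastforce
  have R0pos: "R0 > 0" using bpos by (simp add: R0_def)
  have frontS: "\<exists>k<M. z \<in> sphere (zc k) (r k)" if z: "z \<in> frontier D" for z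
  proof -
    have zn: "z \<notin> D" using z openD by (simp add: frontier_def interior_open)
    then obtain k where k: "k < M" "z \<in> cball (zc k) (r k)" unfolding D_def hv_domain_def by auto
    have "z \<notin> ball (zc k) (r k)"
    proof
      assume zb: "z \<in> ball (zc k) (r k)"
      have "ball (zc k) (r k) \<inter> D = {}" using k(1) unfolding D_def hv_domain_def by (force simp: less_imp_le)
      hence "ball (zc k) (r k) \<inter> closure D = {}" by (simp add: open_Int_closure_eq_empty)
      moreover have "z \<in> closure D" using z by (simp add: frontier_def)
      ultimately show False using zb by auto
    qed
    thus ?thesis using k by (auto simp: dist_commute)
  qed
  from bernoulli obtain Bf where Bf: "\<And>k z. k < M \<Longrightarrow> z \<in> sphere (zc k) (r k) \<Longrightarrow> norm (U z) = Bf k"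
    unfolding U_def by metis
  have img1: "(\<lambda>z. norm (U z)) ` frontier D \<subseteq> Bf ` {..<M}"
    using frontS Bf by fastforce
  have img2: "(\<lambda>z. norm (U z) + 1 / norm (U z)) ` frontier D \<subseteq> (\<lambda>k. Bf k + 1 / Bf k) ` {..<M}"
    using frontS Bf by fastforce
  have bdd1: "bdd_above ((\<lambda>z. norm (U z)) ` frontier D)"
    by (rule bdd_above_mono[OF _ img1]) (auto intro: bdd_above_finite)
  have bdd2: "bdd_above ((\<lambda>z. norm (U z) + 1 / norm (U z)) ` frontier D)"
    by (rule bdd_above_mono[OF _ img2]) (auto intro: bdd_above_finite)
  have D_ne: "D \<noteq> {}" using R0D[of "of_real R0"] R0pos by auto
  have D_nu: "D \<noteq> UNIV" using M_pos r_pos unfolding D_def hv_domain_def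
  proof -
    have r0: "r 0 > 0" using M_pos r_pos by simp
    have "zc 0 \<in> (\<Union>k<M. cball (zc k) (r k))"
      by (rule UN_I[of 0]) (use M_pos r0 in auto)
    thus "- (\<Union>k<M. cball (zc k) (r k)) \<noteq> UNIV" by blast
  qed
  have fne: "frontier D \<noteq> {}" using frontier_not_empty[OF D_ne D_nu] .
  have S_ge: "norm (U z) \<le> S" if "z \<in> frontier D" for z
    unfolding S_def using that bdd1 by (rule cSUP_upper)
  have S_nn: "S \<ge> 0" using fne S_ge by (meson ex_in_conv norm_ge_zero order_trans)
  have S2: "S \<le> (SUP z\<in>frontier D. norm (U z) + 1 / norm (U z))"
    unfolding S_def by (rule cSUP_mono[OF fne bdd2]) (rule bexI, rule le_add_same_cancel1[THEN iffD2], simp)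
  have fD: "(f has_field_derivative f' z) (at z)" if "z \<in> D" for z
  proof -
    have "(f has_field_derivative f' z) (at z within D)"
      using f_deriv that closure_subset[of D] unfolding D_def
      by (meson DERIV_subset subsetD)
    thus ?thesis using at_within_open[OF that openD] by simp
  qed
  have f_holo: "f holomorphic_on D" using fD
    using field_differentiable_def holomorphic_on_def field_differentiable_at_within by blast
  have f'_holo: "f' holomorphic_on D"
    by (rule holomorphic_transform[OF holomorphic_deriv[OF f_holo openD]]) (use fD DERIV_imp_deriv in auto)
  have cl: "closure D = closure (hv_domain M zc r)" by (simp add: D_def)
  have U_holo: "U holomorphic_on D"
    unfolding U_def hv_U_def using W_holo f'_holo f'_nz closure_subset[of D]
    by (auto intro!: holomorphic_intros simp: D_def)
  have U_cont: "continuous_on (closure D) U"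
    unfolding U_def hv_U_def using W_cont f'_cont f'_nz
    by (auto intro!: continuous_intros simp: D_def)
  have W_lim: "(W \<longlongrightarrow> 0) at_infinity"
  proof -
    obtain C where "C > 0" and ev: "\<forall>\<^sub>F x in at_infinity. norm (W x) \<le> C * norm (1 / x)"
      using landau_o.bigE[OF W_infty] by metis
    have "((\<lambda>x::complex. C * norm (1 / x)) \<longlongrightarrow> 0) at_infinity"
      using tendsto_mult_right_zero[OF tendsto_norm_zero[OF tendsto_inverse_0[where 'a=complex]], of C]
      by (simp add: inverse_eq_divide)
    thus ?thesis using Lim_null_comparison[OF ev] by blast
  qed
  obtain C where Cpos: "C > 0" and evf: "\<forall>\<^sub>F x in at_infinity. norm (f x - x) \<le> C * norm (1 / x)"
    using landau_o.bigE[OF f_infty] by metis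
  obtain b1 where b1: "\<And>x. b1 \<le> norm x \<Longrightarrow> norm (f x - x) \<le> C * norm (1 / x)"
    using evf unfolding eventually_at_infinity by blast
  have f'bound: "norm (f' z - 1) \<le> 4 * C * norm (inverse z)"
    if zl: "norm z \<ge> 2 * max (max b1 R0) 1" for z
  proof -
    define g where "g = (\<lambda>x. f x - x)"
    define \<rho> where "\<rho> = norm z / 2"
    have \<rho>pos: "\<rho> > 0" "\<rho> \<ge> 1" "\<rho> \<ge> b1" "\<rho> \<ge> R0" using zl by (auto simp: \<rho>_def)
    have cb: "cball z \<rho> \<subseteq> {w. norm w \<ge> \<rho>}"
    proof
      fix w assume "w \<in> cball z \<rho>"
      hence "norm (z - w) \<le> \<rho>" by (simp add: dist_norm)
      moreover have "norm z \<le> norm w + norm (z - w)" by (metis norm_triangle_sub)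
      ultimately show "w \<in> {w. norm w \<ge> \<rho>}" by (auto simp: \<rho>_def)
    qed
    have cbD: "cball z \<rho> \<subseteq> D" using cb R0D \<rho>pos by force
    have g_holo: "g holomorphic_on D" unfolding g_def using f_holo by (auto intro!: holomorphic_intros)
    have hb: "g holomorphic_on ball z \<rho>" using g_holo cbD ball_subset_cball holomorphic_on_subset by blast
    have cc: "continuous_on (cball z \<rho>) g"
      using holomorphic_on_imp_continuous_on[OF g_holo] cbD continuous_on_subset by blast
    have fin: "g w \<in> ball 0 (2 * C / norm z)" if w: "w \<in> ball z \<rho>" for w
    proof -
      have "norm (z - w) < \<rho>" using w by (simp add: dist_norm)
      moreover have "norm z \<le> norm w + norm (z - w)" by (metis norm_triangle_sub)
      ultimately have wl: "norm w > \<rho>" by (auto simp: \<rho>_def)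
      hence "norm (g w) \<le> C * norm (1 / w)" using b1[of w] \<rho>pos unfolding g_def by auto
      also have "\<dots> = C / norm w" by (simp add: norm_divide)
      also have "\<dots> < C / \<rho>" using wl \<rho>pos Cpos by (simp add: frac_less2)
      also have "\<dots> = 2 * C / norm z" by (simp add: \<rho>_def)
      finally show ?thesis by simp
    qed
    have "norm ((deriv ^^ 1) g z) \<le> fact 1 * (2 * C / norm z) / \<rho> ^ 1"
      by (rule Cauchy_higher_deriv_bound[OF hb cc fin \<rho>pos(1)]) auto
    moreover have "(deriv ^^ 1) g z = f' z - 1"
    proof -
      have "z \<in> D" using cbD \<rho>pos by auto
      hence "(g has_field_derivative f' z - 1) (at z)" unfolding g_def
        by (auto intro!: derivative_eq_intros fD)
      thus ?thesis by (simp add: DERIV_imp_deriv)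
    qed
    ultimately have "norm (f' z - 1) \<le> 2 * C / norm z / \<rho>" by simp
    also have "\<dots> = 4 * C / norm z / norm z" by (simp add: \<rho>_def)
    also have "\<dots> \<le> 4 * C / norm z" using \<rho>pos Cpos
      by (simp add: \<rho>_def divide_le_eq)
    finally show ?thesis by (simp add: norm_inverse divide_inverse)
  qed
  have f'_lim: "(f' \<longlongrightarrow> 1) at_infinity"
  proof -
    have ev: "\<forall>\<^sub>F z in at_infinity. norm (f' z - 1) \<le> 4 * C * norm (inverse z)"
      unfolding eventually_at_infinity using f'bound by blast
    have "((\<lambda>x::complex. 4 * C * norm (inverse x)) \<longlongrightarrow> 0) at_infinity"
      using tendsto_mult_right_zero[OF tendsto_norm_zero[OF tendsto_inverse_0[where 'a=complex]], of "4*C"] by simp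
    hence "((\<lambda>z. f' z - 1) \<longlongrightarrow> 0) at_infinity" using Lim_null_comparison[OF ev] by blast
    thus ?thesis by (simp add: LIM_zero_iff)
  qed
  have U_lim: "(U \<longlongrightarrow> - of_real c) at_infinity"
  proof -
    have "((\<lambda>z. W z / f' z - of_real c) \<longlongrightarrow> 0 / 1 - of_real c) at_infinity"
      by (intro tendsto_intros W_lim f'_lim) auto
    thus ?thesis by (simp add: U_def hv_U_def[abs_def])
  qed
  obtain R1 where R1: "\<And>z. R1 \<le> norm z \<Longrightarrow> norm (U z) < \<bar>c\<bar> + 1"
  proof -
    have "\<forall>\<^sub>F z in at_infinity. norm (U z) < \<bar>c\<bar> + 1"
      using order_tendstoD(2)[OF tendsto_norm[OF U_lim], of "\<bar>c\<bar> + 1"] by simp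
    thus ?thesis using that unfolding eventually_at_infinity by blast
  qed
  define p where "p = zc 0"
  define \<rho> where "\<rho> = r 0"
  have \<rho>pos: "\<rho> > 0" using r_pos M_pos by (simp add: \<rho>_def)
  have distp: "norm (z - p) \<ge> \<rho>" if "z \<in> closure D" for z
  proof (rule ccontr)
    assume "\<not> ?thesis"
    hence zb: "z \<in> ball p \<rho>" by (simp add: dist_norm norm_minus_commute)
    have "ball p \<rho> \<subseteq> cball (zc 0) (r 0)" by (simp add: p_def \<rho>_def ball_subset_cball)
    also have "\<dots> \<subseteq> (\<Union>k<M. cball (zc k) (r k))" using M_pos by (intro UN_upper) simp
    finally have "ball p \<rho> \<inter> D = {}" unfolding D_def hv_domain_def by blast
    hence "ball p \<rho> \<inter> closure D = {}" by (simp add: open_Int_closure_eq_empty)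
    thus False using zb that by auto
  qed
  have keyb: "norm (U z0) ^ n \<le> S ^ n / \<rho> * norm (z0 - p)" if z0: "z0 \<in> D" for z0 n
  proof -
    define K where "K = \<bar>c\<bar> + 1"
    have Kpos: "K > 0" by (simp add: K_def)
    define F where "F = (\<lambda>z. U z ^ n / (z - p))"
    have "norm (F z0) \<le> S ^ n / \<rho> + \<delta>" if \<delta>: "\<delta> > 0" for \<delta>
    proof -
      define R where "R = max (max R1 R0) (norm z0 + 1) + norm p + K ^ n / \<delta>"
      have Rge: "R \<ge> R1" "R \<ge> R0" "R > norm z0" "R - norm p \<ge> K ^ n / \<delta>" "R - norm p > 0"
      proof -
        have a: "K ^ n / \<delta> \<ge> 0" using \<delta> Kpos by simp
        have b: "max (max R1 R0) (norm z0 + 1) \<ge> R1" "max (max R1 R0) (norm z0 + 1) \<ge> R0"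
          "max (max R1 R0) (norm z0 + 1) \<ge> norm z0 + 1" by auto
        have "norm p \<ge> 0" "norm z0 \<ge> 0" by auto
        thus "R \<ge> R1" "R \<ge> R0" "R > norm z0" "R - norm p \<ge> K ^ n / \<delta>" "R - norm p > 0"
          using a b R0pos unfolding R_def by linarith+
      qed
      define T where "T = D \<inter> ball 0 R"
      have "z0 \<in> T" using z0 Rge by (simp add: T_def)
      have Tsub: "closure T \<subseteq> closure D" by (simp add: T_def closure_mono)
      show ?thesis
      proof (rule maximum_modulus_frontier[of F T])
        have Tp: "z - p \<noteq> 0" if "z \<in> closure T" for z
          using distp[of z] that Tsub \<rho>pos by force
        have intT: "interior T = T" using openD by (simp add: T_def interior_open open_Int)
        have UT: "U holomorphic_on T" by (rule holomorphic_on_subset[OF U_holo]) (auto simp: T_def)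
        show "F holomorphic_on interior T"
          unfolding intT F_def
          by (rule holomorphic_on_divide) (use UT Tp closure_subset[of T] in \<open>auto intro!: holomorphic_intros\<close>)
        show "continuous_on (closure T) F"
          unfolding F_def
          by (rule continuous_on_divide) (use continuous_on_subset[OF U_cont Tsub] Tp in \<open>auto intro!: continuous_intros\<close>)
        show "bounded T" unfolding T_def by (rule bounded_subset[OF bounded_ball]) auto
        show "z0 \<in> T" by fact
        fix z assume zf: "z \<in> frontier T"
        hence zc: "z \<in> closure D" using Tsub frontier_def by (metis Diff_iff subsetD)
        have dz: "norm (z - p) \<ge> \<rho>" using distp zc .
        have nF: "norm (F z) = norm (U z) ^ n / norm (z - p)" by (simp add: F_def norm_divide norm_power)
        from zf have "z \<in> frontier D \<or> z \<in> frontier (ball 0 R)" by (simp add: T_def frontier_Int)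
        thus "norm (F z) \<le> S ^ n / \<rho> + \<delta>"
        proof
          assume "z \<in> frontier D"
          hence "norm (U z) ^ n \<le> S ^ n" using S_ge by (simp add: power_mono)
          hence "norm (U z) ^ n / norm (z - p) \<le> S ^ n / \<rho>"
            using dz \<rho>pos S_nn by (meson frac_le norm_ge_zero zero_le_power)
          thus ?thesis using nF \<delta> by simp
        next
          assume "z \<in> frontier (ball 0 R)"
          moreover have "R > 0" using Rge(3) norm_ge_zero[of z0] by linarith
          ultimately have zR: "norm z = R" by (simp add: frontier_ball dist_norm)
          have "norm (U z) < K" using R1 Rge zR by (simp add: K_def)
          hence Un: "norm (U z) ^ n \<le> K ^ n" by (simp add: power_mono)
          have "norm (z - p) \<ge> R - norm p" using zR norm_triangle_ineq2[of z p] by simp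
          have "norm (U z) ^ n / norm (z - p) \<le> K ^ n / (R - norm p)"
            by (rule frac_le) (use Un Rge Kpos \<open>norm (z - p) \<ge> R - norm p\<close> in auto)
          also have "\<dots> \<le> \<delta>" using Rge \<delta> Kpos by (simp add: divide_le_eq mult.commute pos_divide_le_eq)
          finally show ?thesis using nF S_nn \<rho>pos by (smt (verit) divide_nonneg_pos zero_le_power)
        qed
      qed
    qed
    hence "norm (F z0) \<le> S ^ n / \<rho>" by (meson field_le_epsilon)
    moreover have "norm (z0 - p) > 0" using distp[of z0] z0 closure_subset[of D] \<rho>pos by force
    ultimately show ?thesis by (simp add: F_def norm_divide norm_power divide_le_eq)
  qed
  have UleS: "norm (U z) \<le> S" if z: "z \<in> D" for z
  proof (rule ccontr)
    assume nl: "\<not> ?thesis"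
    show False
    proof (cases "S = 0")
      case True
      thus False using keyb[OF z, of 1] nl by simp
    next
      case False
      hence Sp: "S > 0" using S_nn by simp
      have "norm (U z) / S > 1" using nl Sp by simp
      then obtain n where n: "norm (z - p) / \<rho> < (norm (U z) / S) ^ n" using real_arch_pow by blast
      hence "S ^ n * (norm (z - p) / \<rho>) < norm (U z) ^ n"
        using Sp by (simp add: power_divide pos_less_divide_eq mult.commute)
      thus False using keyb[OF z, of n] by simp
    qed
  qed
  have cS: "\<bar>c\<bar> \<le> S"
  proof -
    have "\<forall>\<^sub>F z in at_infinity. norm (U z) \<le> S"
      unfolding eventually_at_infinity using UleS R0D by blast
    from Lim_norm_ubound[OF _ U_lim this] show ?thesis using trivial_limit_at_infinity by simp
  qed
  have "S \<le> real M * S" using M_pos S_nn by (simp add: mult_le_cancel_right1)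
  moreover have "real M * S \<le> real M * (SUP z\<in>frontier D. norm (U z) + 1 / norm (U z))"
    using S2 by (simp add: mult_left_mono)
  ultimately show ?thesis using cS unfolding S_def D_def U_def by linarith
qed

end
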